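(* Let $n\ge1$, $a>0$, $d>0$, and $t\ge a+d$. Then for every $f\in\mathcal{E}_n^-$, $$|f(t)| \le \left(\frac{2e(t-a)}{d}\right)^n\|f\|_{[a,a+d]} \le \left(\frac{2et}{d}\right)^n\|f\|_{[a,a+d]}.$$
   Context: $\mathcal{E}_n^-$ denotes the set of all functions $f(t)=\sum_{j=1}^na_je^{\lambda_jt}$ ($t\in\mathbb{R}$) with $a_j,\lambda_j\in\mathbb{C}$ and $\mathrm{Re}(\lambda_j)\le0$ for all $j$. $\|f\|_{[a,a+d]}:=\sup_{s\in[a,a+d]}|f(s)|$. *)

theory Defs
  imports "HOL-Analysis.Analysis"
begin

definition exp_sums_neg :: "nat \<Rightarrow> (real \<Rightarrow> complex) set" where
  "exp_sums_neg n = {f. \<exists>c lam :: nat \<Rightarrow> complex.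
      (\<forall>j\<in>{1..n}. Re (lam j) \<le> 0) \<and>
      (\<forall>t. f t = (\<Sum>j=1..n. c j * exp (lam j * complex_of_real t)))}"

definition sup_norm_on :: "(real \<Rightarrow> complex) \<Rightarrow> real \<Rightarrow> real \<Rightarrow> real" where
  "sup_norm_on f a d = (SUP s\<in>{a..a+d}. cmod (f s))"

end

theory Submission
  imports Defs
begin

definition S :: "nat \<Rightarrow> nat \<Rightarrow> real" where
  "S n m = (\<Sum>i<n. 2^i * real (m choose i))"

lemma hockey: "(\<Sum>k<m. (k choose i)) = m choose Suc i"
proof (cases m)
  case 0 then show ?thesis by simp
next
  case (Suc m') then show ?thesis
    using sum_choose_upper[of i m'] by (simp add: lessThan_Suc_atMost)
qed

lemma S_rec: "1 + 2 * (\<Sum>k<m. S n k) = S (Suc n) m"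
proof -
  have "(\<Sum>k<m. S n k) = (\<Sum>i<n. 2^i * (\<Sum>k<m. real (k choose i)))"
    unfolding S_def by (subst sum.swap) (simp add: sum_distrib_left)
  also have "\<dots> = (\<Sum>i<n. 2^i * real (m choose Suc i))"
    by (simp add: hockey flip: of_nat_sum)
  finally have "1 + 2 * (\<Sum>k<m. S n k) = 1 + (\<Sum>i<n. 2^Suc i * real (m choose Suc i))"
    by (simp add: sum_distrib_left mult.assoc)
  also have "\<dots> = S (Suc n) m"
    unfolding S_def sum.lessThan_Suc_shift by simp
  finally show ?thesis .
qed

lemma seq_bound:
  fixes c w :: "nat \<Rightarrow> complex"
  assumes "\<forall>j\<in>{1..n}. cmod (w j) \<le> 1" "0 \<le> M"
    "\<forall>i<n. cmod (\<Sum>j=1..n. c j * w j ^ i) \<le> M"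
  shows "cmod (\<Sum>j=1..n. c j * w j ^ m) \<le> S n m * M"
  using assms
proof (induction n arbitrary: c w M m)
  case 0
  then show ?case by (simp add: S_def)
next
  case (Suc n)
  define u where "u k = (\<Sum>j=1..Suc n. c j * w j ^ k)" for k
  define v where "v k = (\<Sum>j=1..n. (c j * (w j - w (Suc n))) * w j ^ k)" for k
  have uv: "u (Suc k) = v k + w (Suc n) * u k" for k
    unfolding u_def v_def
    by (simp add: sum.distrib sum_distrib_left sum_subtractf algebra_simps)
  have wle: "cmod (w (Suc n)) \<le> 1" using Suc.prems(1) by simp
  have vb: "cmod (v i) \<le> 2 * M" if "i < n" for i
  proof -
    have "cmod (v i) \<le> cmod (u (Suc i)) + cmod (w (Suc n) * u i)"
      using uv[of i] by (metis add_diff_cancel_right' norm_triangle_ineq4)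
    also have "\<dots> \<le> cmod (u (Suc i)) + cmod (u i)"
      using wle by (simp add: norm_mult mult_left_le_one_le)
    also have "\<dots> \<le> 2 * M"
    proof -
      have "cmod (u (Suc i)) \<le> M" "cmod (u i) \<le> M"
        using Suc.prems(3) that unfolding u_def by auto
      then show ?thesis by simp
    qed
    finally show ?thesis .
  qed
  have vk: "cmod (v k) \<le> S n k * (2 * M)" for k
    unfolding v_def
    apply (rule Suc.IH)
    using Suc.prems vb unfolding v_def by auto
  have "cmod (u m) \<le> M + (\<Sum>k<m. cmod (v k))"
  proof (induction m)
    case 0 then show ?case using Suc.prems(3) unfolding u_def by force
  next
    case (Suc m)
    have "cmod (u (Suc m)) \<le> cmod (v m) + cmod (w (Suc n) * u m)"
      by (simp add: uv norm_triangle_ineq)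
    also have "\<dots> \<le> cmod (v m) + cmod (u m)"
      using wle by (simp add: norm_mult mult_left_le_one_le)
    finally show ?case using Suc.IH by simp
  qed
  also have "\<dots> \<le> M + (\<Sum>k<m. S n k * (2 * M))"
    using vk by (intro add_left_mono sum_mono) auto
  also have "\<dots> = (1 + 2 * (\<Sum>k<m. S n k)) * M"
    by (simp add: sum_distrib_left sum_distrib_right algebra_simps)
  also have "\<dots> = S (Suc n) m * M" by (simp add: S_rec)
  finally show ?case unfolding u_def .
qed


lemma choose_le: "real (m choose i) \<le> real m ^ i / fact i"
proof -
  have "real ((m choose i) * fact i) \<le> real (m ^ i)"
    using binomial_fact_pow[of m i] by (simp only: of_nat_le_iff)
  then have "real (m choose i) * fact i \<le> real m ^ i" by simp
  then show ?thesis by (simp add: field_simps)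
qed

lemma exp_partial: "(\<Sum>i<n. real k ^ i / fact i) \<le> exp (real k)"
proof -
  have "(\<Sum>i<n. inverse (fact i) * real k ^ i) \<le> (\<Sum>i. inverse (fact i) * real k ^ i)"
    by (rule sum_le_suminf[OF summable_exp]) auto
  also have "\<dots> = exp (real k)" by (simp add: exp_def)
  finally show ?thesis by (simp add: field_simps)
qed

lemma S_bound:
  fixes x :: real
  assumes "n \<ge> 1" "x \<ge> 1" "real m \<le> real n * x"
  shows "S n m \<le> (2 * exp 1 * x) ^ n"
proof -
  have "S n m \<le> (\<Sum>i<n. 2^(n-1) * (x^(n-1) * (real n ^ i / fact i)))"
    unfolding S_def
  proof (rule sum_mono)
    fix i assume i: "i \<in> {..<n}"
    have "real (m choose i) \<le> real m ^ i / fact i" by (rule choose_le)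
    also have "\<dots> \<le> (real n * x) ^ i / fact i"
      by (intro divide_right_mono power_mono assms) auto
    also have "\<dots> = x ^ i * (real n ^ i / fact i)" by (simp add: power_mult_distrib)
    also have "\<dots> \<le> x ^ (n-1) * (real n ^ i / fact i)"
      using i assms by (intro mult_right_mono power_increasing) auto
    finally have A: "real (m choose i) \<le> x ^ (n-1) * (real n ^ i / fact i)" .
    have B: "(2::real)^i \<le> 2^(n-1)" using i by (intro power_increasing) auto
    show "2^i * real (m choose i) \<le> 2^(n-1) * (x^(n-1) * (real n ^ i / fact i))"
      by (rule mult_mono[OF B A]) auto
  qed
  also have "\<dots> = 2^(n-1) * x^(n-1) * (\<Sum>i<n. real n ^ i / fact i)"
    by (simp add: sum_distrib_left mult.assoc)
  also have "\<dots> \<le> 2^(n-1) * x^(n-1) * exp (real n)"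
    using assms by (intro mult_left_mono exp_partial) auto
  also have "\<dots> = 2^(n-1) * x^(n-1) * exp 1 ^ n"
    by (metis exp_of_nat_mult mult.right_neutral)
  also have "\<dots> \<le> 2^n * x^n * exp 1 ^ n"
    using assms by (intro mult_right_mono mult_mono power_increasing) auto
  also have "\<dots> = (2 * exp 1 * x) ^ n" by (simp add: power_mult_distrib)
  finally show ?thesis .
qed


theorem lemma12p2:
  fixes n :: nat and a d t :: real and f :: "real \<Rightarrow> complex"
  assumes "n \<ge> 1" and "a > 0" and "d > 0" and "t \<ge> a + d"
    and "f \<in> exp_sums_neg n"
  shows "cmod (f t) \<le> (2 * exp 1 * (t - a) / d) ^ n * sup_norm_on f a d
         \<and> (2 * exp 1 * (t - a) / d) ^ n * sup_norm_on f a d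
             \<le> (2 * exp 1 * t / d) ^ n * sup_norm_on f a d"
proof -
  obtain c lam :: "nat \<Rightarrow> complex" where lam: "\<forall>j\<in>{1..n}. Re (lam j) \<le> 0"
    and feq: "\<And>t. f t = (\<Sum>j=1..n. c j * exp (lam j * complex_of_real t))"
    using assms(5) unfolding exp_sums_neg_def by blast
  have fcont: "continuous_on {a..a+d} f"
  proof -
    have "f = (\<lambda>t. \<Sum>j=1..n. c j * exp (lam j * complex_of_real t))" using feq by blast
    then show ?thesis by (simp add: continuous_intros)
  qed
  have "compact ((\<lambda>s. cmod (f s)) ` {a..a+d})"
    by (intro compact_continuous_image continuous_on_norm fcont) auto
  then have bdd: "bdd_above ((\<lambda>s. cmod (f s)) ` {a..a+d})"
    by (intro bounded_imp_bdd_above compact_imp_bounded)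
  define N where "N = sup_norm_on f a d"
  have Nge: "cmod (f s) \<le> N" if "s \<in> {a..a+d}" for s
    unfolding N_def sup_norm_on_def by (rule cSUP_upper[OF that bdd])
  have N0: "0 \<le> N"
  proof -
    have "a \<in> {a..a+d}" using assms(3) by simp
    then have "cmod (f a) \<le> N" by (rule Nge)
    then show ?thesis using norm_ge_zero order_trans by blast
  qed
  define x where "x = (t - a) / d"
  have x1: "x \<ge> 1" using assms unfolding x_def by (simp add: field_simps)
  define m where "m = max 1 (nat \<lceil>real (n - 1) * x\<rceil>)"
  have m1: "m \<ge> 1" unfolding m_def by simp
  have mge: "real (n - 1) * x \<le> real m"
  proof -
    have "real (n - 1) * x \<le> real (nat \<lceil>real (n - 1) * x\<rceil>)" by (rule real_nat_ceiling_ge)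
    also have "\<dots> \<le> real m" unfolding m_def by simp
    finally show ?thesis .
  qed
  have mle: "real m \<le> real n * x"
  proof (cases "nat \<lceil>real (n - 1) * x\<rceil> \<le> 1")
    case True
    then have "m = 1" unfolding m_def by simp
    have "1 * x \<le> real n * x" using x1 assms(1) by (intro mult_right_mono) auto
    moreover have "real m = 1" using \<open>m = 1\<close> by simp
    ultimately show ?thesis using x1 by linarith
  next
    case False
    then have "m = nat \<lceil>real (n - 1) * x\<rceil>" unfolding m_def by (intro max_absorb2) linarith
    moreover have "real (n - 1) * x \<ge> 0" using x1 by simp
    ultimately have "real m \<le> real (n - 1) * x + 1"
      by (simp add: of_nat_nat)
    also have "\<dots> \<le> real n * x" using x1 assms(1) by (simp add: of_nat_diff algebra_simps)
    finally show ?thesis .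
  qed
  define h where "h = (t - a) / real m"
  have h0: "h > 0" using assms m1 unfolding h_def by simp
  have tm: "a + real m * h = t" using m1 unfolding h_def by simp
  define c' where "c' j = c j * exp (lam j * complex_of_real a)" for j
  define w where "w j = exp (lam j * complex_of_real h)" for j
  have fk: "f (a + real k * h) = (\<Sum>j=1..n. c' j * w j ^ k)" for k
    unfolding feq c'_def w_def
  proof (rule sum.cong[OF refl])
    fix j
    have "exp (lam j * complex_of_real (a + real k * h)) =
          exp (lam j * complex_of_real a) * exp (of_nat k * (lam j * complex_of_real h))"
      by (simp add: distrib_left exp_add algebra_simps)
    then show "c j * exp (lam j * complex_of_real (a + real k * h)) =
        c j * exp (lam j * complex_of_real a) * exp (lam j * complex_of_real h) ^ k"
      by (simp add: exp_of_nat_mult)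
  qed
  have w1: "\<forall>j\<in>{1..n}. cmod (w j) \<le> 1"
  proof
    fix j assume "j \<in> {1..n}"
    then have "Re (lam j) * h \<le> 0" using lam h0 by (simp add: mult_nonpos_nonneg)
    then show "cmod (w j) \<le> 1" unfolding w_def by (simp add: norm_exp_eq_Re)
  qed
  have grid: "\<forall>i<n. cmod (\<Sum>j=1..n. c' j * w j ^ i) \<le> N"
  proof (intro allI impI)
    fix i assume i: "i < n"
    have "real i * h \<le> real (n - 1) * h"
      using i h0 by (intro mult_right_mono) auto
    also have "\<dots> = real (n - 1) * x * d / real m"
      unfolding h_def x_def using assms by simp
    also have "\<dots> \<le> d"
      using mge m1 assms(3) by (simp add: divide_le_eq mult.commute mult_left_mono)
    finally have "a + real i * h \<in> {a..a+d}" using h0 by simp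
    then show "cmod (\<Sum>j=1..n. c' j * w j ^ i) \<le> N" using Nge fk by metis
  qed
  have "cmod (f t) \<le> S n m * N"
    using seq_bound[OF w1 N0 grid, of m] fk[of m] tm by simp
  also have "\<dots> \<le> (2 * exp 1 * x) ^ n * N"
    by (intro mult_right_mono S_bound assms(1) x1 mle N0)
  also have "\<dots> = (2 * exp 1 * (t - a) / d) ^ n * N" unfolding x_def by simp
  finally have P1: "cmod (f t) \<le> (2 * exp 1 * (t - a) / d) ^ n * N" .
  have "(2 * exp 1 * (t - a) / d) ^ n \<le> (2 * exp 1 * t / d) ^ n"
    using assms by (intro power_mono divide_right_mono mult_left_mono) auto
  then have P2: "(2 * exp 1 * (t - a) / d) ^ n * N \<le> (2 * exp 1 * t / d) ^ n * N"
    by (rule mult_right_mono) (rule N0)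
  show ?thesis using P1 P2 unfolding N_def by blast
qed

end
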